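(* If an unrestricted tree-to-tree Hennie machine $\mathcal{H}$ is narrow-visit on all inputs, then it is a tree-to-tree Hennie machine and $[\![\mathcal{H}]\!]$ has linear height increase: there are constants $c,d$ such that $\mathrm{height}([\![\mathcal{H}]\!](t))\le c\,\mathrm{height}(t)+d$ for every $t$ in its domain.
   Context: Trees: ranked alphabets are finite sets with a rank function to $\mathbb{N}$; $T_\Sigma$ is the set of finite ordered $\Sigma$-labeled trees where a node labeled $\sigma$ has $\mathrm{rank}(\sigma)$ children (nodes are words over positive integers, root $\varepsilon$, $i$-th child of $u$ is $ui$); $T_\Sigma[Y]$ allows extra rank-$0$ leaves labeled in $Y$. $\mathrm{height}(t)$ is the maximal number of edges on a root-to-leaf path. The ancestor order on nodes is the prefix order; an antichain is a set of pairwise incomparable nodes. Hennie machines: a uTHM is $(Q,M,\top,\Sigma,\Gamma,q_{init},\delta)$ with finite states $Q$, finite memory symbols $M\ni\top$, $q_{init}\in Q$, partial $\delta:Q\times\Sigma\times M\rightharpoonup T_\Gamma[Q\times M\times D]$, $D=\{\uparrow,1,..,\max\mathrm{rank}\Sigma\}$, leaves $(q',m',d)$ of $\delta(q,\sigma,m)$ having $d\in\{\uparrow,1,..,\mathrm{rank}\sigma\}$. Configurations on $t$ are $(u,q,\mu)$, $\mu:$ nodes$\to M$, initially $(\varepsilon,q_{init},\text{constant }\top)$; the step of $(u,q,\mu)$ is $\delta(q,\mathrm{lab}_t(u),\mu(u))$ with each leaf $(q',m',d)$ replaced by $(ud,q',\mu[u\mapsto m'])$ ($ud$ the parent if $d=\uparrow$,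 else the $d$-th child; undefined if nonexistent). Confluent rewriting of configuration leaves by steps from the initial configuration yields the output $[\![\mathcal{H}]\!](t)\in T_\Gamma$, if any. A branch-outputting run is $C_0,..,C_n$ with $C_0$ initial and $C_{i+1}$ a leaf label of the step of $C_i$; its number of visits at a node set $S$ is $|\{i:\text{position of }C_i\in S\}|$. A THM is a uTHM for which some $N$ bounds visits at every single node, for all inputs and runs. A uTHM is narrow-visit on all inputs if some $N$ bounds the visits at every antichain $S$ of $t$, for all inputs $t$ and all runs on $t$. *)

theory Defs
  imports Main
begin

text \<open>A tree over the ranked alphabet (A, rk) with extra leaves in Y (i.e. an element of
  T_A[Y]) is one satisfying wfT A rk Y; T_A is wfT A rk {}.\<close>
datatype ('a, 'y) rtree = Nd 'a "('a, 'y) rtree list" | Vr 'y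

fun wfT :: "'a set \<Rightarrow> ('a \<Rightarrow> nat) \<Rightarrow> 'y set \<Rightarrow> ('a, 'y) rtree \<Rightarrow> bool" where
  "wfT A rk Y (Nd a ts) = (a \<in> A \<and> length ts = rk a \<and> (\<forall>s\<in>set ts. wfT A rk Y s))"
| "wfT A rk Y (Vr y) = (y \<in> Y)"

text \<open>Subtree at a node; nodes are words over positive integers, the i-th child of u is u@[i].\<close>
fun subt :: "('a, 'y) rtree \<Rightarrow> nat list \<Rightarrow> ('a, 'y) rtree option" where
  "subt t [] = Some t"
| "subt (Nd a ts) (i # u) = (if 1 \<le> i \<and> i \<le> length ts then subt (ts ! (i - 1)) u else None)"
| "subt (Vr y) (i # u) = None"

definition pos :: "('a, 'y) rtree \<Rightarrow> nat list set" where
  "pos t = {u. subt t u \<noteq> None}"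

definition lab :: "('a, 'y) rtree \<Rightarrow> nat list \<Rightarrow> 'a" where
  "lab t u = (case the (subt t u) of Nd a _ \<Rightarrow> a)"

definition height :: "('a, 'y) rtree \<Rightarrow> nat" where
  "height t = Max (length ` pos t)"

definition anc :: "nat list \<Rightarrow> nat list \<Rightarrow> bool" where
  "anc u v \<longleftrightarrow> (\<exists>w. v = u @ w)"

definition antichain :: "nat list set \<Rightarrow> bool" where
  "antichain S \<longleftrightarrow> (\<forall>u\<in>S. \<forall>v\<in>S. u \<noteq> v \<longrightarrow> \<not> anc u v \<and> \<not> anc v u)"

datatype dir = Up | Dn nat

record ('q, 'm, 's, 'g) uthm =
  Qs :: "'q set"
  Ms :: "'m set"
  topm :: 'm
  Sig :: "'s set"
  rkS :: "'s \<Rightarrow> nat"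
  Gam :: "'g set"
  rkG :: "'g \<Rightarrow> nat"
  qinit :: 'q
  delta :: "'q \<Rightarrow> 's \<Rightarrow> 'm \<Rightarrow> ('g, 'q \<times> 'm \<times> dir) rtree option"

definition is_uTHM :: "('q, 'm, 's, 'g) uthm \<Rightarrow> bool" where
  "is_uTHM H \<longleftrightarrow>
     finite (Qs H) \<and> finite (Ms H) \<and> topm H \<in> Ms H \<and> qinit H \<in> Qs H \<and>
     finite (Sig H) \<and> finite (Gam H) \<and>
     (\<forall>q \<sigma> m r. delta H q \<sigma> m = Some r \<longrightarrow>
        q \<in> Qs H \<and> \<sigma> \<in> Sig H \<and> m \<in> Ms H \<and>
        wfT (Gam H) (rkG H) (Qs H \<times> Ms H \<times> UNIV) r \<and>
        (\<forall>(q', m', d) \<in> set2_rtree r.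
           d = Up \<or> (\<exists>i. d = Dn i \<and> 1 \<le> i \<and> i \<le> rkS H \<sigma>)))"

text \<open>Input trees; they are in T_Sigma when wfT (Sig H) (rkS H) {} holds.\<close>
type_synonym 's itree = "('s, unit) rtree"

type_synonym ('q, 'm) config = "nat list \<times> 'q \<times> (nat list \<Rightarrow> 'm)"

definition move :: "('s, 'y) rtree \<Rightarrow> nat list \<Rightarrow> dir \<Rightarrow> nat list option" where
  "move t u d = (case d of
      Up \<Rightarrow> (if u = [] then None else Some (butlast u))
    | Dn i \<Rightarrow> (if u @ [i] \<in> pos t then Some (u @ [i]) else None))"

definition init_conf :: "('q, 'm, 's, 'g) uthm \<Rightarrow> ('q, 'm) config" where
  "init_conf H = ([], qinit H, \<lambda>_. topm H)"

definition step :: "('q, 'm, 's, 'g) uthm \<Rightarrow> 's itree \<Rightarrow> ('q, 'm) config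
                    \<Rightarrow> ('g, ('q, 'm) config) rtree option" where
  "step H t c = (case c of (u, q, \<mu>) \<Rightarrow>
     if u \<in> pos t then
       (case delta H q (lab t u) (\<mu> u) of
          None \<Rightarrow> None
        | Some r \<Rightarrow>
            if (\<forall>(q', m', d) \<in> set2_rtree r. move t u d \<noteq> None)
            then Some (map_rtree id (\<lambda>(q', m', d). (the (move t u d), q', \<mu>(u := m'))) r)
            else None)
     else None)"

inductive rw :: "('q, 'm, 's, 'g) uthm \<Rightarrow> 's itree \<Rightarrow> ('g, ('q, 'm) config) rtree
                 \<Rightarrow> ('g, ('q, 'm) config) rtree \<Rightarrow> bool" for H t where
  leaf: "step H t c = Some r \<Longrightarrow> rw H t (Vr c) r"
| inner: "i < length ts \<Longrightarrow> rw H t (ts ! i) s' \<Longrightarrow> rw H t (Nd g ts) (Nd g (ts[i := s']))"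

text \<open>[[H]](t) = s: rewriting from the initial configuration reaches the
  configuration-free tree s (by confluence, s is unique).\<close>
definition hm_output :: "('q, 'm, 's, 'g) uthm \<Rightarrow> 's itree \<Rightarrow> ('g, ('q, 'm) config) rtree \<Rightarrow> bool" where
  "hm_output H t s \<longleftrightarrow> (rw H t)\<^sup>*\<^sup>* (Vr (init_conf H)) s \<and> set2_rtree s = {}"

text \<open>Branch-outputting runs C_0, ..., C_n as nonempty lists.\<close>
definition is_run :: "('q, 'm, 's, 'g) uthm \<Rightarrow> 's itree \<Rightarrow> ('q, 'm) config list \<Rightarrow> bool" where
  "is_run H t cs \<longleftrightarrow> cs \<noteq> [] \<and> hd cs = init_conf H \<and>
     (\<forall>i. Suc i < length cs \<longrightarrow>
        (\<exists>r. step H t (cs ! i) = Some r \<and> cs ! Suc i \<in> set2_rtree r))"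

definition visits :: "('q, 'm) config list \<Rightarrow> nat list set \<Rightarrow> nat" where
  "visits cs S = card {i. i < length cs \<and> fst (cs ! i) \<in> S}"

definition is_THM :: "('q, 'm, 's, 'g) uthm \<Rightarrow> bool" where
  "is_THM H \<longleftrightarrow> is_uTHM H \<and>
     (\<exists>N. \<forall>t cs u. wfT (Sig H) (rkS H) {} t \<longrightarrow> is_run H t cs \<longrightarrow> u \<in> pos t \<longrightarrow>
         visits cs {u} \<le> N)"

definition narrow_visit :: "('q, 'm, 's, 'g) uthm \<Rightarrow> bool" where
  "narrow_visit H \<longleftrightarrow>
     (\<exists>N. \<forall>t cs S. wfT (Sig H) (rkS H) {} t \<longrightarrow> is_run H t cs \<longrightarrow>
         S \<subseteq> pos t \<longrightarrow> antichain S \<longrightarrow> visits cs S \<le> N)"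

end

theory Submission
  imports Defs
begin

lemma subt_size: "subt t u = Some s \<Longrightarrow> length u + size s \<le> size t \<and> (\<forall>i\<in>set u. i \<le> size t)"
proof (induction t u rule: subt.induct)
  case (2 a ts i u)
  then have i: "1 \<le> i \<and> i \<le> length ts" and sub: "subt (ts ! (i - 1)) u = Some s" by (auto split: if_splits)
  have mem: "ts ! (i - 1) \<in> set ts" using i by auto
  have "size (ts ! (i - 1)) \<le> size_list size ts" using size_list_estimation'[OF mem, of "size (ts ! (i - 1))" size] by simp
  moreover have "length ts \<le> size_list size ts" by (induction ts) auto
  ultimately show ?case using 2(1)[OF i sub] i by auto
qed auto

lemma pos_finite: "finite (pos t)"
proof -
  have "pos t \<subseteq> {u. set u \<subseteq> {..size t} \<and> length u \<le> size t}"
    unfolding pos_def using subt_size by fastforce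
  moreover have "finite {u. set u \<subseteq> {..size t} \<and> length u \<le> size t}"
    using finite_lists_length_le[of "{..size t}" "size t"] by simp
  ultimately show ?thesis by (rule finite_subset)
qed

lemma nil_pos: "[] \<in> pos t" by (simp add: pos_def)

lemma len_le_height: "u \<in> pos t \<Longrightarrow> length u \<le> height t"
  unfolding height_def using pos_finite[of t] by (auto intro: Max_ge)

lemma height_le: "(\<And>u. u \<in> pos t \<Longrightarrow> length u \<le> B) \<Longrightarrow> height t \<le> B"
  unfolding height_def using pos_finite nil_pos by (subst Max_le_iff) auto

lemma subt_map: "subt (map_rtree f g r) w = map_option (map_rtree f g) (subt r w)"
  by (induction r w rule: subt.induct) auto

lemma subt_leaf_set2: "subt r w = Some (Vr c) \<Longrightarrow> c \<in> set2_rtree r"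
  by (induction r w rule: subt.induct) (auto split: if_splits)

lemma rw_pos:
  assumes "rw H t T T'" "p' \<in> pos T'"
  shows "(\<exists>p c r w. subt T p = Some (Vr c) \<and> step H t c = Some r \<and> p' = p @ w \<and> subt T' p' = subt r w)
       \<or> (p' \<in> pos T \<and> (\<forall>c. subt T' p' = Some (Vr c) \<longrightarrow> subt T p' = Some (Vr c)))"
  using assms
proof (induction arbitrary: p' rule: rw.induct)
  case (leaf c r)
  then show ?case by (intro disjI1 exI[of _ "[]"]) auto
next
  case (inner i ts s' g)
  show ?case
  proof (cases p')
    case Nil
    then show ?thesis by (simp add: pos_def)
  next
    case (Cons j u)
    with inner.prems have j: "1 \<le> j" "j \<le> length ts" and u: "subt (ts[i := s'] ! (j - 1)) u \<noteq> None"
      by (auto simp: pos_def split: if_splits)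
    show ?thesis
    proof (cases "j - 1 = i")
      case True
      then have "u \<in> pos s'" using u inner.hyps(1) by (simp add: pos_def)
      from inner.IH[OF this] show ?thesis
      proof
        assume "\<exists>p c r w. subt (ts ! i) p = Some (Vr c) \<and> step H t c = Some r \<and> u = p @ w \<and> subt s' u = subt r w"
        then obtain p c r w where "subt (ts ! i) p = Some (Vr c)" "step H t c = Some r" "u = p @ w" "subt s' u = subt r w" by blast
        then show ?thesis using True j inner.hyps(1) Cons
          by (intro disjI1 exI[of _ "j # p"] exI[of _ c] exI[of _ r] exI[of _ w]) auto
      next
        assume "u \<in> pos (ts ! i) \<and> (\<forall>c. subt s' u = Some (Vr c) \<longrightarrow> subt (ts ! i) u = Some (Vr c))"
        then show ?thesis using True j inner.hyps(1) Cons by (auto simp: pos_def)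
      qed
    next
      case False
      then show ?thesis using j u Cons by (auto simp: pos_def)
    qed
  qed
qed

lemma run_snoc:
  assumes "is_run H t cs" "step H t (last cs) = Some r" "c' \<in> set2_rtree r"
  shows "is_run H t (cs @ [c'])"
  unfolding is_run_def
proof (intro conjI allI impI)
  show "cs @ [c'] \<noteq> []" by simp
  show "hd (cs @ [c']) = init_conf H" using assms(1) by (simp add: is_run_def)
  fix i assume i: "Suc i < length (cs @ [c'])"
  show "\<exists>r. step H t ((cs @ [c']) ! i) = Some r \<and> (cs @ [c']) ! Suc i \<in> set2_rtree r"
  proof (cases "Suc i < length cs")
    case True
    then show ?thesis using assms(1) by (auto simp: is_run_def nth_append)
  next
    case False
    then have "i = length cs - 1" "Suc i = length cs" using i assms(1) by (auto simp: is_run_def)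
    then show ?thesis using assms(1) assms(2,3) by (auto simp: is_run_def nth_append last_conv_nth)
  qed
qed

lemma step_len:
  assumes bound: "\<forall>q \<sigma> m r. delta H q \<sigma> m = Some r \<longrightarrow> size r \<le> h"
    and st: "step H t c = Some r" and w: "subt r w \<noteq> None"
  shows "length w \<le> h"
proof -
  obtain u q \<mu> where c: "c = (u, q, \<mu>)" by (cases c) auto
  from st c obtain r0 f where d: "delta H q (lab t u) (\<mu> u) = Some r0" and r: "r = map_rtree id f r0"
    by (auto simp: step_def split: if_splits option.splits)
  from w r have "subt r0 w \<noteq> None" by (simp add: subt_map)
  then obtain s0 where "subt r0 w = Some s0" by auto
  then have "length w \<le> size r0" using subt_size by fastforce
  also have "\<dots> \<le> h" using bound d by blast
  finally show ?thesis .
qed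

definition inv_ok where
  "inv_ok H t h T \<longleftrightarrow> (\<forall>p\<in>pos T. \<exists>cs. is_run H t cs \<and> length p \<le> h * length cs \<and>
      (\<forall>c. subt T p = Some (Vr c) \<longrightarrow> last cs = c \<and> length p + h \<le> h * length cs))"

lemma inv_step:
  assumes bound: "\<forall>q \<sigma> m r. delta H q \<sigma> m = Some r \<longrightarrow> size r \<le> h"
    and rw: "rw H t T T'" and P: "inv_ok H t h T"
  shows "inv_ok H t h T'"
  unfolding inv_ok_def
proof
  fix p' assume p': "p' \<in> pos T'"
  from rw_pos[OF rw p'] show "\<exists>cs. is_run H t cs \<and> length p' \<le> h * length cs \<and>
      (\<forall>c. subt T' p' = Some (Vr c) \<longrightarrow> last cs = c \<and> length p' + h \<le> h * length cs)"
  proof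
    assume "\<exists>p c r w. subt T p = Some (Vr c) \<and> step H t c = Some r \<and> p' = p @ w \<and> subt T' p' = subt r w"
    then obtain p c r w where pc: "subt T p = Some (Vr c)" and st: "step H t c = Some r"
      and pw: "p' = p @ w" and sw: "subt T' p' = subt r w" by blast
    have "p \<in> pos T" using pc by (simp add: pos_def)
    with P pc obtain cs where cs: "is_run H t cs" "last cs = c" "length p + h \<le> h * length cs"
      unfolding inv_ok_def by blast
    have "subt r w \<noteq> None" using sw p' by (simp add: pos_def)
    then have lw: "length w \<le> h" using step_len[OF bound st] by blast
    show ?thesis
    proof (cases "\<exists>c'. subt r w = Some (Vr c')")
      case True
      then obtain c' where c': "subt r w = Some (Vr c')" by blast
      have run: "is_run H t (cs @ [c'])" using run_snoc[OF cs(1) _ subt_leaf_set2[OF c']] st cs(2) by simp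
      show ?thesis
        by (rule exI[of _ "cs @ [c']"]) (use run cs lw pw sw c' in auto)
    next
      case False
      show ?thesis
        by (rule exI[of _ cs]) (use cs lw pw sw False in auto)
    qed
  next
    assume a: "p' \<in> pos T \<and> (\<forall>c. subt T' p' = Some (Vr c) \<longrightarrow> subt T p' = Some (Vr c))"
    with P obtain cs where "is_run H t cs \<and> length p' \<le> h * length cs \<and>
      (\<forall>c. subt T p' = Some (Vr c) \<longrightarrow> last cs = c \<and> length p' + h \<le> h * length cs)"
      unfolding inv_ok_def by blast
    then show ?thesis using a by blast
  qed
qed

lemma inv_star:
  assumes bound: "\<forall>q \<sigma> m r. delta H q \<sigma> m = Some r \<longrightarrow> size r \<le> h"
    and "(rw H t)\<^sup>*\<^sup>* (Vr (init_conf H)) T"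
  shows "inv_ok H t h T"
  using assms(2)
proof (induction rule: rtranclp_induct)
  case base
  have "is_run H t [init_conf H]" by (simp add: is_run_def)
  then show ?case unfolding inv_ok_def pos_def
    by (intro ballI exI[of _ "[init_conf H]"]) (auto elim: subt.elims)
next
  case (step y z)
  then show ?case using inv_step[OF bound] by blast
qed

lemma anc_same_len: "length u = length v \<Longrightarrow> anc u v \<Longrightarrow> u = v"
  unfolding anc_def by auto

lemma level_antichain: "antichain {u \<in> pos t. length u = k}"
  unfolding antichain_def using anc_same_len by (metis (mono_tags, lifting) mem_Collect_eq)

lemma step_pos: "step H t c = Some r \<Longrightarrow> fst c \<in> pos t"
  by (cases c) (simp add: step_def split: if_splits)

lemma run_len:
  assumes N: "\<forall>S. S \<subseteq> pos t \<longrightarrow> antichain S \<longrightarrow> visits cs S \<le> N"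
    and run: "is_run H t cs"
  shows "length cs \<le> N * (height t + 1) + 1"
proof -
  define L where "L = (\<lambda>k. {i. i < length cs \<and> fst (cs ! i) \<in> {u \<in> pos t. length u = k}})"
  have sub: "{..<length cs - 1} \<subseteq> (\<Union>k\<in>{..height t}. L k)"
  proof
    fix i assume i: "i \<in> {..<length cs - 1}"
    then have si: "Suc i < length cs" by auto
    then obtain r where "step H t (cs ! i) = Some r" using run unfolding is_run_def by blast
    then have p: "fst (cs ! i) \<in> pos t" by (rule step_pos)
    then have k: "length (fst (cs ! i)) \<in> {..height t}" using len_le_height by simp
    have "i \<in> L (length (fst (cs ! i)))" unfolding L_def using p si by simp
    then show "i \<in> (\<Union>k\<in>{..height t}. L k)" using k by (rule UN_I[rotated])
  qed
  have fin: "finite (\<Union>k\<in>{..height t}. L k)"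
    by (rule finite_subset[of _ "{..<length cs}"]) (auto simp: L_def)
  have "length cs - 1 = card {..<length cs - 1}" by simp
  also have "\<dots> \<le> card (\<Union>k\<in>{..height t}. L k)"
    by (rule card_mono[OF fin sub])
  also have "\<dots> \<le> (\<Sum>k\<in>{..height t}. card (L k))" by (rule card_UN_le) simp
  also have "\<dots> \<le> (\<Sum>k\<in>{..height t}. N)"
  proof (rule sum_mono)
    fix k
    have "{u \<in> pos t. length u = k} \<subseteq> pos t" by blast
    then have "visits cs {u \<in> pos t. length u = k} \<le> N" using N level_antichain by blast
    then show "card (L k) \<le> N" by (simp add: visits_def L_def)
  qed
  also have "\<dots> = N * (height t + 1)" by simp
  finally show ?thesis by linarith
qed

lemma delta_bound:
  assumes "is_uTHM H"
  shows "\<exists>h. \<forall>q \<sigma> m r. delta H q \<sigma> m = Some r \<longrightarrow> size r \<le> h"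
proof -
  let ?D = "{r. \<exists>q \<sigma> m. delta H q \<sigma> m = Some r}"
  have "?D \<subseteq> (\<lambda>(q, \<sigma>, m). the (delta H q \<sigma> m)) ` (Qs H \<times> Sig H \<times> Ms H)"
  proof
    fix r assume "r \<in> ?D"
    then obtain q \<sigma> m where d: "delta H q \<sigma> m = Some r" by blast
    then have "q \<in> Qs H" "\<sigma> \<in> Sig H" "m \<in> Ms H" using assms unfolding is_uTHM_def by blast+
    then show "r \<in> (\<lambda>(q, \<sigma>, m). the (delta H q \<sigma> m)) ` (Qs H \<times> Sig H \<times> Ms H)"
      using d by (intro image_eqI[of _ _ "(q, \<sigma>, m)"]) auto
  qed
  moreover have "finite (Qs H \<times> Sig H \<times> Ms H)" using assms unfolding is_uTHM_def by auto
  ultimately have fin: "finite ?D" by (meson finite_imageI finite_subset)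
  show ?thesis
  proof (intro exI allI impI)
    fix q \<sigma> m r assume "delta H q \<sigma> m = Some r"
    then have "r \<in> ?D" by blast
    then show "size r \<le> Max (size ` ?D)" by (rule Max_ge[OF finite_imageI[OF fin] imageI])
  qed
qed

theorem mainTheorem15:
  fixes H :: "('q, 'm, 's, 'g) uthm"
  assumes "is_uTHM H" and "narrow_visit H"
  shows "is_THM H \<and>
         (\<exists>c d :: nat. \<forall>t s. wfT (Sig H) (rkS H) {} t \<longrightarrow> hm_output H t s \<longrightarrow>
             height s \<le> c * height t + d)"
proof
  from assms(2) obtain N where N: "\<forall>t cs S. wfT (Sig H) (rkS H) {} t \<longrightarrow> is_run H t cs \<longrightarrow>
         S \<subseteq> pos t \<longrightarrow> antichain S \<longrightarrow> visits cs S \<le> N"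
    unfolding narrow_visit_def by blast
  have ac1: "antichain {u}" for u :: "nat list" by (simp add: antichain_def)
  show "is_THM H" unfolding is_THM_def
  proof (intro conjI exI allI impI)
    fix t cs u assume "wfT (Sig H) (rkS H) {} t" "is_run H t cs" "u \<in> pos t"
    then show "visits cs {u} \<le> N" using N ac1[of u] by blast
  qed (rule assms(1))
  obtain h where h: "\<forall>q \<sigma> m r. delta H q \<sigma> m = Some r \<longrightarrow> size r \<le> h"
    using delta_bound[OF assms(1)] by blast
  show "\<exists>c d :: nat. \<forall>t s. wfT (Sig H) (rkS H) {} t \<longrightarrow> hm_output H t s \<longrightarrow>
             height s \<le> c * height t + d"
  proof (intro exI allI impI)
    fix t s assume wf: "wfT (Sig H) (rkS H) {} t" and out: "hm_output H t s"
    have I: "inv_ok H t h s" using inv_star[OF h] out by (simp add: hm_output_def)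
    show "height s \<le> h * N * height t + (h * N + h)"
    proof (rule height_le)
      fix p assume p: "p \<in> pos s"
      with I obtain cs where cs: "is_run H t cs" "length p \<le> h * length cs"
        unfolding inv_ok_def by blast
      have "\<forall>S. S \<subseteq> pos t \<longrightarrow> antichain S \<longrightarrow> visits cs S \<le> N" using N wf cs(1) by blast
      then have "length cs \<le> N * (height t + 1) + 1" using run_len[OF _ cs(1)] by blast
      then have "h * length cs \<le> h * (N * (height t + 1) + 1)" by (rule mult_le_mono2)
      also have "\<dots> = h * N * height t + (h * N + h)" by (simp add: algebra_simps)
      finally show "length p \<le> h * N * height t + (h * N + h)" using cs(2) by linarith
    qed
  qed
qed

end
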